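(* Let $n, r, d$ be positive integers with $n\geqslant r+1$ and $d\geqslant2$, and let $\delta=(d-2)/(d-1)$. Then $$\frac{1}{r}\binom{d+r}{d+1}\leqslant m\!\left(K_n^d, r\right)\leqslant\frac{(r+2d-1)^d-\delta^2(r-2)^d}{2\,d!}.$$
   Context: All graphs are finite, simple and undirected. For a nonnegative integer $r$ and a graph $G$, the $r$-neighbor bootstrap percolation process on $G$ starts with a set $A_0\subseteq V(G)$ of initially active vertices, and for $i\geqslant 1$, $A_i=A_{i-1}\cup\{v\in V(G) : |N(v)\cap A_{i-1}|\geqslant r\}$, where $N(v)$ is the set of neighbors of $v$. The set $A_0$ is a percolating set if $\bigcup_{i\geqslant 0}A_i=V(G)$. $m(G,r)$ denotes the minimum size of a percolating set of $G$ in the $r$-neighbor bootstrap percolation process. $K_n$ is the complete graph with vertex set $\{0,1,\ldots,n-1\}$, and $K_n^d$ is the Cartesian product of $d$ copies of $K_n$: its vertex set is $\{0,\ldots,n-1\}^d$ and two vertices are adjacent iff they differ in exactly one coordinate. *)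

theory Defs
  imports Complex_Main
begin

text \<open>A finite simple graph is given by a vertex set V and a symmetric irreflexive
adjacency relation E. Neighbourhood of v: the vertices u in V with E v u.\<close>

definition nbhd :: "'a set \<Rightarrow> ('a \<Rightarrow> 'a \<Rightarrow> bool) \<Rightarrow> 'a \<Rightarrow> 'a set" where
  "nbhd V E v = {u \<in> V. E v u}"

definition bp_step :: "'a set \<Rightarrow> ('a \<Rightarrow> 'a \<Rightarrow> bool) \<Rightarrow> nat \<Rightarrow> 'a set \<Rightarrow> 'a set" where
  "bp_step V E r A = A \<union> {v \<in> V. card (nbhd V E v \<inter> A) \<ge> r}"

definition percolating :: "'a set \<Rightarrow> ('a \<Rightarrow> 'a \<Rightarrow> bool) \<Rightarrow> nat \<Rightarrow> 'a set \<Rightarrow> bool" where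
  "percolating V E r A0 \<longleftrightarrow> A0 \<subseteq> V \<and> (\<Union>i. (bp_step V E r ^^ i) A0) = V"

definition m_perc :: "'a set \<Rightarrow> ('a \<Rightarrow> 'a \<Rightarrow> bool) \<Rightarrow> nat \<Rightarrow> nat" where
  "m_perc V E r = (LEAST k. \<exists>A. percolating V E r A \<and> card A = k)"

text \<open>K_n^d: vertices are words of length d over {0..n-1} (coordinates indexed 0..d-1),
  adjacent iff they differ in exactly one coordinate.\<close>
definition Knd_V :: "nat \<Rightarrow> nat \<Rightarrow> nat list set" where
  "Knd_V n d = {x. length x = d \<and> (\<forall>i<d. x ! i < n)}"

definition Knd_E :: "nat \<Rightarrow> nat list \<Rightarrow> nat list \<Rightarrow> bool" where
  "Knd_E d x y \<longleftrightarrow> card {i. i < d \<and> x ! i \<noteq> y ! i} = 1"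

end

theory Submission
  imports Defs "HOL-Library.Function_Algebras" "HOL-Computational_Algebra.Polynomial"
begin

lemma fun_sum_apply: "finite A \<Longrightarrow> (\<Sum>v\<in>A. f v) x = (\<Sum>v\<in>A. f v x)"
  by (induction A rule: finite_induct) auto

lemma lin_count:
  fixes w :: "'i \<Rightarrow> 'q \<Rightarrow> real"
  assumes fM: "finite M" and fQ: "finite Q"
    and indep: "\<And>c. (\<forall>q\<in>Q. (\<Sum>i\<in>M. c i * w i q) = 0) \<Longrightarrow> (\<forall>i\<in>M. c i = 0)"
  shows "card M \<le> card Q"
proof -
  interpret vs: vector_space "\<lambda>(c::real) (f::'q \<Rightarrow> real). (\<lambda>x. c * f x)"
    by unfold_locales (auto simp: algebra_simps)
  define W where "W i = (\<lambda>q. if q \<in> Q then w i q else 0)" for i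
  define T where "T = (\<lambda>q. (\<lambda>p. if p = q then (1::real) else 0)) ` Q"
  have injW: "inj_on W M"
  proof
    fix i j assume ij: "i \<in> M" "j \<in> M" "W i = W j"
    show "i = j"
    proof (rule ccontr)
      assume "i \<noteq> j"
      define c where "c k = (if k = i then 1 else if k = j then -1 else (0::real))" for k
      have "\<forall>q\<in>Q. (\<Sum>k\<in>M. c k * w k q) = 0"
      proof
        fix q assume q: "q \<in> Q"
        have "(\<Sum>k\<in>M. c k * w k q) = (\<Sum>k\<in>{i,j}. c k * w k q)"
          using ij fM by (intro sum.mono_neutral_right) (auto simp: c_def)
        also have "\<dots> = w i q - w j q" using \<open>i \<noteq> j\<close> by (simp add: c_def)
        also have "\<dots> = 0" using ij(3) q unfolding W_def by (metis (mono_tags) diff_self)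
        finally show "(\<Sum>k\<in>M. c k * w k q) = 0" .
      qed
      from indep[OF this] ij(1) have "c i = 0" by blast
      then show False by (simp add: c_def)
    qed
  qed
  have ind: "vs.independent (W ` M)"
    unfolding vs.dependent_explicit
  proof clarify
    fix t u v assume t: "finite t" "t \<subseteq> W ` M" and s: "(\<Sum>v\<in>t. (\<lambda>x. u v * v x)) = 0"
      and v: "v \<in> t" "u v \<noteq> 0"
    define c where "c k = (if W k \<in> t then u (W k) else 0)" for k
    have "\<forall>q\<in>Q. (\<Sum>k\<in>M. c k * w k q) = 0"
    proof
      fix q assume q: "q \<in> Q"
      have "(\<Sum>k\<in>M. c k * w k q) = (\<Sum>k\<in>M \<inter> W -` t. u (W k) * W k q)"
        using fM q by (intro sum.mono_neutral_cong_right) (auto simp: c_def W_def)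
      also have "\<dots> = (\<Sum>v\<in>W ` (M \<inter> W -` t). u v * v q)"
        using injW by (subst sum.reindex) (auto intro: inj_on_subset)
      also have "W ` (M \<inter> W -` t) = t" using t by auto
      also have "(\<Sum>v\<in>t. u v * v q) = (\<Sum>v\<in>t. (\<lambda>x. u v * v x)) q"
        using t(1) by (simp add: fun_sum_apply)
      also have "\<dots> = 0" using s by simp
      finally show "(\<Sum>k\<in>M. c k * w k q) = 0" .
    qed
    from indep[OF this] v t obtain k where "k \<in> M" "W k = v" "c k \<noteq> 0" by (auto simp: c_def)
    with indep[OF \<open>\<forall>q\<in>Q. _\<close>] show False by auto
  qed
  have sp: "W ` M \<subseteq> vs.span T"
  proof
    fix f assume "f \<in> W ` M"
    then obtain i where i: "f = W i" by auto
    have "W i = (\<Sum>q\<in>Q. (\<lambda>x. w i q * (\<lambda>p. if p = q then (1::real) else 0) x))"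
    proof
      fix x
      show "W i x = (\<Sum>q\<in>Q. (\<lambda>x. w i q * (\<lambda>p. if p = q then (1::real) else 0) x)) x"
        using fQ by (simp add: fun_sum_apply W_def if_distrib[of "\<lambda>z. _ * z"] sum.delta' cong: if_cong)
    qed
    also have "\<dots> \<in> vs.span T"
      by (intro vs.span_sum vs.span_scale vs.span_base) (auto simp: T_def)
    finally show "f \<in> vs.span T" using i by simp
  qed
  have "card (W ` M) \<le> card T"
    using vs.independent_span_bound[OF _ ind sp] fQ by (simp add: T_def)
  also have "card T \<le> card Q" unfolding T_def by (rule card_image_le[OF fQ])
  finally show ?thesis using card_image[OF injW] by simp
qed

lemma poly_zero_many_roots:
  fixes p :: "real poly"
  assumes "degree p \<le> m" "finite R" "m < card R" "\<forall>x\<in>R. poly p x = 0"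
  shows "p = 0"
proof (rule ccontr)
  assume "p \<noteq> 0"
  have "R \<subseteq> {x. poly p x = 0}" using assms(4) by auto
  moreover have "finite {x. poly p x = 0}" using \<open>p \<noteq> 0\<close> poly_roots_finite by blast
  ultimately have "card R \<le> card {x. poly p x = 0}" by (rule card_mono[rotated])
  also have "\<dots> \<le> degree p" using card_poly_roots_bound[OF \<open>p \<noteq> 0\<close>] .
  finally show False using assms by linarith
qed

lemma coeff_mult_le:
  fixes p q :: "'a::comm_semiring_1 poly"
  assumes "degree p \<le> i" "degree q \<le> j"
  shows "coeff (p * q) (i + j) = coeff p i * coeff q j"
proof -
  have "coeff (p * q) (i + j) = (\<Sum>l\<le>i+j. coeff p l * coeff q (i + j - l))"
    by (rule coeff_mult)
  also have "\<dots> = (\<Sum>l\<in>{i}. coeff p l * coeff q (i + j - l))"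
  proof (intro sum.mono_neutral_right)
    show "\<forall>l\<in>{..i + j} - {i}. coeff p l * coeff q (i + j - l) = 0"
    proof
      fix l assume l: "l \<in> {..i + j} - {i}"
      show "coeff p l * coeff q (i + j - l) = 0"
      proof (cases "l < i")
        case True
        then have "degree q < i + j - l" using assms(2) by linarith
        then show ?thesis by (simp add: coeff_eq_0)
      next
        case False
        then have "degree p < l" using assms(1) l by auto
        then show ?thesis by (simp add: coeff_eq_0)
      qed
    qed
  qed auto
  finally show ?thesis by simp
qed

lemma lin_power_coeff:
  fixes b c :: real
  shows "degree ([:b, c:] ^ k) \<le> k \<and> coeff ([:b, c:] ^ k) k = c ^ k"
proof (induction k)
  case 0 then show ?case by simp
next
  case (Suc k)
  have d1: "degree [:b, c:] \<le> 1" by simp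
  have "degree ([:b, c:] ^ Suc k) \<le> Suc k"
    using degree_power_le[of "[:b, c:]" "Suc k"] d1
    by (metis dual_order.trans mult.commute mult_le_mono1 nat_mult_1_right)
  moreover have "coeff ([:b, c:] ^ Suc k) (Suc k) = c ^ Suc k"
    using coeff_mult_le[OF d1 conjunct1[OF Suc.IH]] Suc.IH by simp
  ultimately show ?case by blast
qed

lemma top_coeff:
  fixes S :: "real set" and q :: "nat \<Rightarrow> real poly"
  assumes fS: "finite S" and cS: "m < card S" and dq: "\<forall>k\<le>m. degree (q k) \<le> m - k"
    and z: "\<forall>a\<in>S. \<forall>t. (\<Sum>k\<le>m. (a * (a - t)) ^ k * poly (q k) t) = 0"
  shows "\<forall>k\<le>m. coeff (q k) (m - k) = 0"
proof -
  define E where "E = (\<Sum>k\<le>m. monom (coeff (q k) (m - k)) k)"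
  have Ea: "poly E (- a) = 0" if a: "a \<in> S" for a
  proof -
    define P where "P = (\<Sum>k\<le>m. [:a * a, - a:] ^ k * q k)"
    have "\<forall>t. poly P t = 0"
    proof
      fix t
      have "poly P t = (\<Sum>k\<le>m. (a * (a - t)) ^ k * poly (q k) t)"
        unfolding P_def poly_sum poly_mult poly_power
        by (intro sum.cong refl) (simp add: algebra_simps)
      then show "poly P t = 0" using z a by simp
    qed
    then have P0: "P = 0" using poly_all_0_iff_0 by blast
    have "coeff P m = (\<Sum>k\<le>m. coeff ([:a * a, - a:] ^ k * q k) (k + (m - k)))"
      unfolding P_def coeff_sum by (intro sum.cong refl) simp
    also have "\<dots> = (\<Sum>k\<le>m. (- a) ^ k * coeff (q k) (m - k))"
      using lin_power_coeff dq by (intro sum.cong refl coeff_mult_le[THEN trans]) auto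
    also have "\<dots> = poly E (- a)"
      unfolding E_def poly_sum poly_monom by (intro sum.cong refl) simp
    finally show ?thesis using P0 by simp
  qed
  have dE: "degree E \<le> m"
    unfolding E_def by (intro degree_sum_le order.trans[OF degree_monom_le]) auto
  have "E = 0"
  proof (rule poly_zero_many_roots[OF dE])
    show "finite (uminus ` S)" using fS by simp
    show "m < card (uminus ` S)" using cS by (simp add: card_image)
    show "\<forall>x\<in>uminus ` S. poly E x = 0" using Ea by auto
  qed
  then have "\<forall>k\<le>m. coeff E k = 0" by simp
  moreover have "coeff E k = coeff (q k) (m - k)" if "k \<le> m" for k
  proof -
    have "coeff E k = (\<Sum>j\<le>m. coeff (monom (coeff (q j) (m - j)) j) k)"
      unfolding E_def coeff_sum ..
    also have "\<dots> = (\<Sum>j\<in>{k}. coeff (monom (coeff (q j) (m - j)) j) k)"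
      using that by (intro sum.mono_neutral_right) (auto simp: coeff_monom)
    finally show ?thesis by (simp add: coeff_monom)
  qed
  ultimately show ?thesis by auto
qed

lemma deg0_coeff0:
  fixes p :: "real poly"
  assumes "degree p \<le> 0" "coeff p 0 = 0" shows "p = 0"
  using assms leading_coeff_0_iff by (metis le_zero_eq)

lemma biv_lemma:
  fixes S :: "real set" and q :: "nat \<Rightarrow> real poly"
  assumes "finite S"
  shows "m < card S \<Longrightarrow> (\<forall>k\<le>m. degree (q k) \<le> m - k) \<Longrightarrow>
    (\<forall>a\<in>S. \<forall>t. (\<Sum>k\<le>m. (a * (a - t)) ^ k * poly (q k) t) = 0) \<Longrightarrow> \<forall>k\<le>m. q k = 0"
proof (induction m arbitrary: q)
  case 0
  from top_coeff[OF assms 0] have "coeff (q 0) 0 = 0" by simp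
  with 0 deg0_coeff0 show ?case by auto
next
  case (Suc m)
  from top_coeff[OF assms Suc.prems] have tc: "\<forall>k\<le>Suc m. coeff (q k) (Suc m - k) = 0" .
  have qS: "q (Suc m) = 0" using tc Suc.prems(2) deg0_coeff0 by (metis diff_self_eq_0 order_refl)
  have dq: "\<forall>k\<le>m. degree (q k) \<le> m - k"
  proof (intro allI impI)
    fix k assume k: "k \<le> m"
    have "degree (q k) \<le> Suc m - k" using Suc.prems(2) k by simp
    moreover have "degree (q k) \<noteq> Suc m - k"
    proof
      assume h: "degree (q k) = Suc m - k"
      then have "q k \<noteq> 0" using k by auto
      with h tc k show False using leading_coeff_0_iff by (metis le_SucI)
    qed
    ultimately show "degree (q k) \<le> m - k" using k by linarith
  qed
  have z: "\<forall>a\<in>S. \<forall>t. (\<Sum>k\<le>m. (a * (a - t)) ^ k * poly (q k) t) = 0"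
    using Suc.prems(3) qS by simp
  have "\<forall>k\<le>m. q k = 0" using Suc.IH[OF _ dq z] Suc.prems(1) by simp
  with qS show ?case by (metis le_Suc_eq)
qed

definition mon :: "nat \<times> nat list \<Rightarrow> (nat \<Rightarrow> real) \<Rightarrow> real \<Rightarrow> real" where
  "mon \<alpha> a t = t ^ fst \<alpha> * (\<Prod>j<length (snd \<alpha>). (a j * (a j - t)) ^ (snd \<alpha> ! j))"

definition monp :: "nat \<times> nat list \<Rightarrow> (nat \<Rightarrow> real) \<Rightarrow> real poly" where
  "monp \<alpha> a = monom 1 (fst \<alpha>) * (\<Prod>j<length (snd \<alpha>). [:a j * a j, - a j:] ^ (snd \<alpha> ! j))"

definition Mset :: "nat \<Rightarrow> nat \<Rightarrow> (nat \<times> nat list) set" where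
  "Mset d m = {\<alpha>. length (snd \<alpha>) = d \<and> fst \<alpha> + sum_list (snd \<alpha>) \<le> m}"

lemma poly_monp: "poly (monp \<alpha> a) t = mon \<alpha> a t"
  unfolding monp_def mon_def poly_mult poly_prod poly_power poly_monom
  by (auto intro!: prod.cong simp: algebra_simps)

lemma degree_monp: "degree (monp \<alpha> a) \<le> fst \<alpha> + sum_list (snd \<alpha>)"
proof -
  have "degree (\<Prod>j<length (snd \<alpha>). [:a j * a j, - a j:] ^ (snd \<alpha> ! j))
      \<le> (\<Sum>j<length (snd \<alpha>). degree ([:a j * a j, - a j:] ^ (snd \<alpha> ! j)))"
    using degree_prod_sum_le[of "{..<length (snd \<alpha>)}" "\<lambda>j. [:a j * a j, - a j:] ^ (snd \<alpha> ! j)"]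
    by (simp add: o_def)
  also have "\<dots> \<le> (\<Sum>j<length (snd \<alpha>). snd \<alpha> ! j)"
    by (intro sum_mono) (use lin_power_coeff in blast)
  also have "\<dots> = sum_list (snd \<alpha>)"
    by (simp add: sum_list_sum_nth atLeast0LessThan)
  finally have h: "degree (\<Prod>j<length (snd \<alpha>). [:a j * a j, - a j:] ^ (snd \<alpha> ! j)) \<le> sum_list (snd \<alpha>)" .
  show ?thesis unfolding monp_def
    by (rule order.trans[OF degree_mult_le]) (use h degree_monom_le[of "1::real" "fst \<alpha>"] in linarith)
qed

lemma finite_Mset: "finite (Mset d m)"
proof -
  have "Mset d m \<subseteq> {..m} \<times> {ks. set ks \<subseteq> {..m} \<and> length ks = d}"
    unfolding Mset_def using member_le_sum_list by fastforce
  moreover have "finite ({..m} \<times> {ks. set ks \<subseteq> {..m} \<and> length ks = d})"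
    by (intro finite_cartesian_product finite_lists_length_eq) auto
  ultimately show ?thesis by (rule finite_subset)
qed

lemma Gpoly:
  "(\<Sum>\<alpha>\<in>Mset d m. c \<alpha> * mon \<alpha> a t) = poly (\<Sum>\<alpha>\<in>Mset d m. smult (c \<alpha>) (monp \<alpha> a)) t"
  by (simp add: poly_sum poly_monp)

lemma Gdeg: "degree (\<Sum>\<alpha>\<in>Mset d m. smult (c \<alpha>) (monp \<alpha> a)) \<le> m"
proof (intro degree_sum_le[OF finite_Mset])
  fix \<alpha> assume "\<alpha> \<in> Mset d m"
  then show "degree (smult (c \<alpha>) (monp \<alpha> a)) \<le> m"
    using degree_smult_le[of "c \<alpha>" "monp \<alpha> a"] degree_monp[of \<alpha> a]
    unfolding Mset_def by auto
qed

lemma mon_cong: "(\<And>j. j < length (snd \<alpha>) \<Longrightarrow> a j = b j) \<Longrightarrow> mon \<alpha> a t = mon \<alpha> b t"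
  unfolding mon_def by (auto intro!: prod.cong)

lemma mon_Cons: "mon (k0, k # ks) a t = (a 0 * (a 0 - t)) ^ k * mon (k0, ks) (\<lambda>j. a (Suc j)) t"
  unfolding mon_def snd_conv fst_conv length_Cons prod.lessThan_Suc_shift by simp

lemma Mset_Suc: "Mset (Suc d) m = (\<lambda>(k, \<beta>). (fst \<beta>, k # snd \<beta>)) ` (SIGMA k:{..m}. Mset d (m - k))"
proof (intro equalityI subsetI)
  fix \<alpha> assume "\<alpha> \<in> Mset (Suc d) m"
  then obtain k0 k ks where a: "\<alpha> = (k0, k # ks)" "length ks = d" "k0 + k + sum_list ks \<le> m"
    unfolding Mset_def by (cases \<alpha>; cases "snd \<alpha>") auto
  then show "\<alpha> \<in> (\<lambda>(k, \<beta>). (fst \<beta>, k # snd \<beta>)) ` (SIGMA k:{..m}. Mset d (m - k))"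
    by (intro image_eqI[of _ _ "(k, (k0, ks))"]) (auto simp: Mset_def)
qed (auto simp: Mset_def)

lemma inj_Mset_Suc: "inj_on (\<lambda>(k, \<beta>). (fst \<beta>, k # snd \<beta>)) (SIGMA k:{..m}. Mset d (m - k))"
  by (auto simp: inj_on_def prod_eq_iff)

lemma sum_Mset_Suc:
  "(\<Sum>\<alpha>\<in>Mset (Suc d) m. f \<alpha>) = (\<Sum>k\<le>m. \<Sum>\<beta>\<in>Mset d (m - k). f (fst \<beta>, k # snd \<beta>))"
  unfolding Mset_Suc
  by (subst sum.reindex[OF inj_Mset_Suc]) (simp add: sum.Sigma finite_Mset split_def)

lemma indep_mon:
  "(\<forall>j<d. finite (S j) \<and> m < card (S j)) \<Longrightarrow>
   (\<forall>a. (\<forall>j<d. a j \<in> S j) \<longrightarrow> (\<forall>t. (\<Sum>\<alpha>\<in>Mset d m. c \<alpha> * mon \<alpha> a t) = 0)) \<Longrightarrow>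
   \<forall>\<alpha>\<in>Mset d m. c \<alpha> = 0"
proof (induction d arbitrary: S c m)
  case 0
  define P where "P = (\<Sum>k\<le>m. monom (c (k, [])) k)"
  have M0: "Mset 0 m = (\<lambda>k. (k, [])) ` {..m}" by (auto simp: Mset_def)
  have "\<forall>t. poly P t = 0"
  proof
    fix t
    have "poly P t = (\<Sum>\<alpha>\<in>Mset 0 m. c \<alpha> * mon \<alpha> (\<lambda>_. 0) t)"
      unfolding P_def M0 poly_sum poly_monom
      by (subst sum.reindex) (auto simp: inj_on_def mon_def)
    then show "poly P t = 0" using "0.prems"(2) by simp
  qed
  then have "P = 0" using poly_all_0_iff_0 by blast
  have "c (k, []) = 0" if "k \<le> m" for k
  proof -
    have "coeff P k = (\<Sum>j\<in>{k}. coeff (monom (c (j, [])) j) k)"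
      unfolding P_def coeff_sum using that
      by (intro sum.mono_neutral_right) (auto simp: coeff_monom)
    then show ?thesis using \<open>P = 0\<close> by (simp add: coeff_monom)
  qed
  then show ?case by (auto simp: Mset_def)
next
  case (Suc d)
  define ck where "ck k \<beta> = c (fst \<beta>, k # snd \<beta>)" for k \<beta>
  have main: "\<forall>\<beta>\<in>Mset d (m - k). ck k \<beta> = 0" if k: "k \<le> m" for k
  proof (rule Suc.IH[of "\<lambda>j. S (Suc j)"])
    show "\<forall>j<d. finite (S (Suc j)) \<and> m - k < card (S (Suc j))" using Suc.prems(1) by auto
    show "\<forall>b. (\<forall>j<d. b j \<in> S (Suc j)) \<longrightarrow> (\<forall>t. (\<Sum>\<beta>\<in>Mset d (m - k). ck k \<beta> * mon \<beta> b t) = 0)"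
    proof (intro allI impI)
      fix b t assume b: "\<forall>j<d. b j \<in> S (Suc j)"
      define q where "q k = (\<Sum>\<beta>\<in>Mset d (m - k). smult (ck k \<beta>) (monp \<beta> b))" for k
      have qe: "(\<Sum>\<beta>\<in>Mset d (m - k). ck k \<beta> * mon \<beta> b t) = poly (q k) t" for k t
        unfolding q_def by (rule Gpoly)
      have "\<forall>k\<le>m. q k = 0"
      proof (rule biv_lemma[of "S 0"])
        show "finite (S 0)" "m < card (S 0)" using Suc.prems(1) by auto
        show "\<forall>k\<le>m. degree (q k) \<le> m - k" unfolding q_def using Gdeg by blast
        show "\<forall>a\<in>S 0. \<forall>t. (\<Sum>k\<le>m. (a * (a - t)) ^ k * poly (q k) t) = 0"
        proof (intro ballI allI)
          fix a0 t assume a0: "a0 \<in> S 0"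
          define a where "a j = (if j = 0 then a0 else b (j - 1))" for j
          have "\<forall>j<Suc d. a j \<in> S j" using a0 b by (auto simp: a_def less_Suc_eq_0_disj)
          then have "(\<Sum>\<alpha>\<in>Mset (Suc d) m. c \<alpha> * mon \<alpha> a t) = 0" using Suc.prems(2) by blast
          also have "(\<Sum>\<alpha>\<in>Mset (Suc d) m. c \<alpha> * mon \<alpha> a t)
              = (\<Sum>k\<le>m. (a0 * (a0 - t)) ^ k * (\<Sum>\<beta>\<in>Mset d (m - k). ck k \<beta> * mon \<beta> b t))"
            unfolding sum_Mset_Suc
            by (intro sum.cong refl) (simp add: ck_def mon_Cons sum_distrib_left a_def algebra_simps)
          finally show "(\<Sum>k\<le>m. (a0 * (a0 - t)) ^ k * poly (q k) t) = 0" by (simp add: qe)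
        qed
      qed
      then show "(\<Sum>\<beta>\<in>Mset d (m - k). ck k \<beta> * mon \<beta> b t) = 0" using qe k by simp
    qed
  qed
  show ?case
  proof
    fix \<alpha> assume "\<alpha> \<in> Mset (Suc d) m"
    then obtain k \<beta> where "k \<le> m" "\<beta> \<in> Mset d (m - k)" "\<alpha> = (fst \<beta>, k # snd \<beta>)"
      unfolding Mset_Suc by auto
    with main show "c \<alpha> = 0" by (auto simp: ck_def)
  qed
qed

abbreviation "cl V E r A \<equiv> (\<Union>i. (bp_step V E r ^^ i) A)"

lemma bp_step_mono_arg: "S \<subseteq> bp_step V E r S"
  unfolding bp_step_def by auto

lemma iter_mono: "i \<le> j \<Longrightarrow> (bp_step V E r ^^ i) A \<subseteq> (bp_step V E r ^^ j) A"
proof (induction j)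
  case 0 then show ?case by simp
next
  case (Suc j)
  then show ?case
    using bp_step_mono_arg[of "(bp_step V E r ^^ j) A" V E r] by (auto simp: le_Suc_eq)
qed

lemma iter_subset: "A \<subseteq> V \<Longrightarrow> (bp_step V E r ^^ i) A \<subseteq> V"
  by (induction i) (auto simp: bp_step_def)

lemma finite_V: "finite (Knd_V n d)"
proof -
  have "Knd_V n d \<subseteq> {xs. set xs \<subseteq> {..<n} \<and> length xs = d}"
    unfolding Knd_V_def by (auto simp: in_set_conv_nth)
  moreover have "finite {xs. set xs \<subseteq> {..<n} \<and> length xs = d}"
    by (intro finite_lists_length_eq) auto
  ultimately show ?thesis by (rule finite_subset)
qed

lemma closure_add:
  assumes fV: "finite V" and AV: "A \<subseteq> V" and x: "x \<in> V"
    and c: "r \<le> card (nbhd V E x \<inter> cl V E r A)"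
  shows "x \<in> cl V E r A"
proof -
  let ?f = "bp_step V E r"
  let ?N = "nbhd V E x \<inter> cl V E r A"
  have fN: "finite ?N" using fV unfolding nbhd_def by (rule finite_subset[rotated]) auto
  have "\<forall>y\<in>?N. \<exists>i. y \<in> (?f ^^ i) A" by blast
  then obtain idx where idx: "\<forall>y\<in>?N. y \<in> (?f ^^ idx y) A" by metis
  define K where "K = Max (idx ` ?N)"
  have "?N \<subseteq> (?f ^^ K) A"
  proof
    fix y assume y: "y \<in> ?N"
    then have "idx y \<le> K" unfolding K_def using fN by (intro Max_ge finite_imageI imageI)
    then show "y \<in> (?f ^^ K) A" using iter_mono[of "idx y" K V E r A] idx y by blast
  qed
  then have "?N \<subseteq> nbhd V E x \<inter> (?f ^^ K) A" by blast
  moreover have "finite (nbhd V E x \<inter> (?f ^^ K) A)"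
    using fV unfolding nbhd_def by (rule finite_subset[rotated]) auto
  ultimately have "card ?N \<le> card (nbhd V E x \<inter> (?f ^^ K) A)" by (rule card_mono[rotated])
  then have "r \<le> card (nbhd V E x \<inter> (?f ^^ K) A)" using c by linarith
  then have "x \<in> bp_step V E r ((?f ^^ K) A)" unfolding bp_step_def using x by blast
  then have "x \<in> (?f ^^ Suc K) A" by simp
  then show ?thesis by blast
qed

lemma upd_in_V: "x \<in> Knd_V n d \<Longrightarrow> v < n \<Longrightarrow> x[i := v] \<in> Knd_V n d"
proof -
  assume x: "x \<in> Knd_V n d" and v: "v < n"
  have "x[i := v] ! j < n" if "j < d" for j
    using x v that unfolding Knd_V_def by (cases "i = j") auto
  then show ?thesis using x unfolding Knd_V_def by simp
qed

lemma upd_E: "length x = d \<Longrightarrow> i < d \<Longrightarrow> v \<noteq> x ! i \<Longrightarrow> Knd_E d x (x[i := v])"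
proof -
  assume a: "length x = d" "i < d" "v \<noteq> x ! i"
  have "{j. j < d \<and> x ! j \<noteq> x[i := v] ! j} = {i}"
    using a by (auto simp: nth_list_update)
  then show ?thesis unfolding Knd_E_def by simp
qed

lemma E_upd:
  assumes "Knd_E d x y"
  shows "\<exists>i<d. y ! i \<noteq> x ! i \<and> (\<forall>j<d. j \<noteq> i \<longrightarrow> x ! j = y ! j)"
proof -
  obtain i where i: "{j. j < d \<and> x ! j \<noteq> y ! j} = {i}"
  proof -
    have "card {j. j < d \<and> x ! j \<noteq> y ! j} = 1" using assms unfolding Knd_E_def .
    then show ?thesis using that by (rule card_1_singletonE)
  qed
  have "i \<in> {j. j < d \<and> x ! j \<noteq> y ! j}" using i by simp
  then have id: "i < d" "y ! i \<noteq> x ! i" by simp_all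
  have oth: "\<forall>j<d. j \<noteq> i \<longrightarrow> x ! j = y ! j"
  proof (intro allI impI)
    fix j assume j: "j < d" "j \<noteq> i"
    show "x ! j = y ! j"
    proof (rule ccontr)
      assume "x ! j \<noteq> y ! j"
      then have "j \<in> {j. j < d \<and> x ! j \<noteq> y ! j}" using j by simp
      then show False using i j by simp
    qed
  qed
  show ?thesis using id oth by blast
qed

lemma upd_eq_of:
  assumes "length x = d" "length y = d" "i < d" "\<forall>j<d. j \<noteq> i \<longrightarrow> x ! j = y ! j"
  shows "y = x[i := y ! i]"
proof (rule nth_equalityI)
  show "length y = length (x[i := y ! i])" using assms by simp
  fix k assume k: "k < length y"
  show "y ! k = x[i := y ! i] ! k"
  proof (cases "k = i")
    case True then show ?thesis using assms by simp
  next
    case False then show ?thesis using assms k by simp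
  qed
qed

lemma sum_list_upd: "i < length x \<Longrightarrow> sum_list (x[i := v]) + x ! i = sum_list x + (v::nat)"
proof (induction x arbitrary: i)
  case Nil then show ?case by simp
next
  case (Cons a x) then show ?case by (cases i) auto
qed

lemma div_ceil_bound:
  fixes m d :: nat assumes "d > 0"
  shows "m \<le> d * ((m + d - 1) div d)" and "\<And>q. q < (m + d - 1) div d \<Longrightarrow> d * q < m"
proof -
  have e: "m + d - 1 = d * ((m + d - 1) div d) + (m + d - 1) mod d" by simp
  have "(m + d - 1) mod d < d" using assms by simp
  then show "m \<le> d * ((m + d - 1) div d)" using e assms by linarith
  fix q assume q: "q < (m + d - 1) div d"
  then have "d * (q + 1) \<le> d * ((m + d - 1) div d)" using assms by (intro mult_le_mono2) simp
  also have "\<dots> \<le> m + d - 1" using e by linarith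
  finally show "d * q < m" using assms by (simp add: algebra_simps)
qed

definition Aup :: "nat \<Rightarrow> nat \<Rightarrow> nat \<Rightarrow> nat list set" where
  "Aup n d r = {x \<in> Knd_V n d. sum_list x \<le> r \<and> sum_list x mod d = r mod d}"

lemma Aup_perc:
  assumes d: "d > 0" and n: "n \<ge> r + 1"
  shows "percolating (Knd_V n d) (Knd_E d) r (Aup n d r)"
proof -
  let ?V = "Knd_V n d" and ?E = "Knd_E d" and ?A = "Aup n d r"
  have AV: "?A \<subseteq> ?V" unfolding Aup_def by auto
  have fV: "finite ?V" by (rule finite_V)
  have main: "\<forall>x\<in>?V. sum_list x = s \<longrightarrow> x \<in> cl ?V ?E r ?A" for s
  proof (induction s rule: less_induct)
    case (less s)
    show ?case
    proof (intro ballI impI)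
      fix x assume x: "x \<in> ?V" and sx: "sum_list x = s"
      have lx: "length x = d" and xn: "\<forall>i<d. x ! i < n" using x unfolding Knd_V_def by auto
      show "x \<in> cl ?V ?E r ?A"
      proof (cases "x \<in> ?A")
        case True
        then show ?thesis by (intro UN_I[of 0]) auto
      next
        case False
        define m where "m = r - s"
        define K where "K = (m + d - 1) div d"
        define W where "W i = {v. v < x ! i} \<union> (\<lambda>q. x ! i + (m - d * q)) ` {..<K}" for i
        define U where "U = (\<Union>i<d. (\<lambda>v. x[i := v]) ` W i)"
        have dqK: "d * q < m" if "q < K" for q using div_ceil_bound(2)[OF d] that K_def by blast
        have xi_le: "x ! i \<le> s" if "i < d" for i using elem_le_sum_list[of i x] lx sx that by simp
        have Wne: "v \<noteq> x ! i" if "v \<in> W i" for i v using that unfolding W_def by (auto dest: dqK)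
        have U_sub: "U \<subseteq> nbhd ?V ?E x \<inter> cl ?V ?E r ?A"
        proof
          fix y assume "y \<in> U"
          then obtain i v where iv: "i < d" "v \<in> W i" "y = x[i := v]" unfolding U_def by auto
          have su: "sum_list y + x ! i = s + v" using sum_list_upd[of i x v] iv lx sx by simp
          show "y \<in> nbhd ?V ?E x \<inter> cl ?V ?E r ?A"
          proof (cases "v < x ! i")
            case True
            have "v < n" using True xn iv(1) by (meson order.strict_trans)
            then have yV: "y \<in> ?V" using upd_in_V[OF x] iv(3) by simp
            have "sum_list y < s" using su True by linarith
            then have "y \<in> cl ?V ?E r ?A" using less.IH yV by blast
            moreover have "?E x y" using upd_E[OF lx iv(1) Wne[OF iv(2)]] iv(3) by simp
            ultimately show ?thesis using yV by (simp add: nbhd_def)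
          next
            case False
            then obtain q where q: "q < K" "v = x ! i + (m - d * q)" using iv unfolding W_def by auto
            have dq: "d * q < m" using dqK q by blast
            then have sr: "s < r" unfolding m_def by linarith
            have "v \<le> r" using q(2) xi_le[OF iv(1)] m_def sr by linarith
            then have vn: "v < n" using n by linarith
            have yV: "y \<in> ?V" using upd_in_V[OF x vn] iv(3) by simp
            have sy: "sum_list y = r - d * q" using su q(2) m_def dq sr by linarith
            have "sum_list y mod d = r mod d"
            proof -
              have "r = sum_list y + d * q" using sy dq m_def by linarith
              then show ?thesis by simp
            qed
            then have "y \<in> ?A" using yV sy unfolding Aup_def by auto
            then have "y \<in> cl ?V ?E r ?A" by (intro UN_I[of 0]) auto
            moreover have "?E x y" using upd_E[OF lx iv(1) Wne[OF iv(2)]] iv(3) by simp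
            ultimately show ?thesis using yV by (simp add: nbhd_def)
          qed
        qed
        have cardW: "card (W i) = x ! i + K" if "i < d" for i
        proof -
          have "card (W i) = card {v. v < x ! i} + card ((\<lambda>q. x ! i + (m - d * q)) ` {..<K})"
            unfolding W_def by (intro card_Un_disjoint) auto
          moreover have "inj_on (\<lambda>q. x ! i + (m - d * q)) {..<K}"
          proof
            fix q q' assume qq: "q \<in> {..<K}" "q' \<in> {..<K}" "x ! i + (m - d * q) = x ! i + (m - d * q')"
            have "d * q < m" "d * q' < m" using qq dqK by auto
            moreover have "m - d * q = m - d * q'" using qq by simp
            ultimately have "d * q = d * q'" by linarith
            then show "q = q'" using d by simp
          qed
          ultimately show ?thesis by (simp add: card_image)
        qed
        have cardU: "card U = s + d * K"
        proof -
          have "card U = (\<Sum>i<d. card ((\<lambda>v. x[i := v]) ` W i))"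
            unfolding U_def
          proof (rule card_UN_disjoint)
            show "finite {..<d}" by simp
            show "\<forall>i\<in>{..<d}. finite ((\<lambda>v. x[i := v]) ` W i)" unfolding W_def by auto
            show "\<forall>i\<in>{..<d}. \<forall>j\<in>{..<d}. i \<noteq> j \<longrightarrow>
                ((\<lambda>v. x[i := v]) ` W i) \<inter> ((\<lambda>v. x[j := v]) ` W j) = {}"
            proof (intro ballI impI)
              fix i j assume ij: "i \<in> {..<d}" "j \<in> {..<d}" "i \<noteq> j"
              show "((\<lambda>v. x[i := v]) ` W i) \<inter> ((\<lambda>v. x[j := v]) ` W j) = {}"
              proof (rule ccontr)
                assume "((\<lambda>v. x[i := v]) ` W i) \<inter> ((\<lambda>v. x[j := v]) ` W j) \<noteq> {}"
                then obtain v w where vw: "v \<in> W i" "x[i := v] = x[j := w]" by auto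
                then have "x[i := v] ! i = x[j := w] ! i" by simp
                then have "v = x ! i" using ij lx by simp
                then show False using Wne vw by blast
              qed
            qed
          qed
          also have "\<dots> = (\<Sum>i<d. x ! i + K)"
          proof (intro sum.cong refl)
            fix i assume i: "i \<in> {..<d}"
            have "inj_on (\<lambda>v. x[i := v]) (W i)"
            proof
              fix v w assume "x[i := v] = x[i := w]"
              then have "x[i := v] ! i = x[i := w] ! i" by simp
              then show "v = w" using i lx by simp
            qed
            then show "card ((\<lambda>v. x[i := v]) ` W i) = x ! i + K" using cardW i by (simp add: card_image)
          qed
          also have "\<dots> = s + d * K"
            using sx lx by (simp add: sum.distrib sum_list_sum_nth atLeast0LessThan)
          finally show ?thesis .
        qed
        have "r \<le> s + d * K"
        proof (cases "s < r")
          case True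
          then show ?thesis using div_ceil_bound(1)[OF d, of m] unfolding K_def m_def by linarith
        qed simp
        also have "\<dots> = card U" using cardU by simp
        also have "\<dots> \<le> card (nbhd ?V ?E x \<inter> cl ?V ?E r ?A)"
        proof (rule card_mono[OF _ U_sub])
          show "finite (nbhd ?V ?E x \<inter> cl ?V ?E r ?A)"
            using fV unfolding nbhd_def by (rule finite_subset[rotated]) auto
        qed
        finally show ?thesis by (rule closure_add[OF fV AV x])
      qed
    qed
  qed
  have "cl ?V ?E r ?A = ?V"
  proof
    show "cl ?V ?E r ?A \<subseteq> ?V" using iter_subset[OF AV] by blast
    show "?V \<subseteq> cl ?V ?E r ?A" using main by blast
  qed
  then show ?thesis unfolding percolating_def using AV by simp
qed

lemma finite_lists_sum: "finite {l::nat list. length l = k \<and> sum_list l = N}"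
proof -
  have "{l::nat list. length l = k \<and> sum_list l = N} \<subseteq> {l. set l \<subseteq> {..N} \<and> length l = k}"
    using member_le_sum_list by fastforce
  moreover have "finite {l::nat list. set l \<subseteq> {..N} \<and> length l = k}"
    by (intro finite_lists_length_eq) auto
  ultimately show ?thesis by (rule finite_subset)
qed

lemma card_lists_le: "card {y::nat list. length y = d \<and> sum_list y \<le> N} \<le> (N + d) choose d"
proof -
  let ?T = "{l::nat list. length l = Suc d \<and> sum_list l = N}"
  have "card {y::nat list. length y = d \<and> sum_list y \<le> N} \<le> card ?T"
  proof (rule card_inj_on_le[of "\<lambda>y. y @ [N - sum_list y]"])
    show "inj_on (\<lambda>y. y @ [N - sum_list y]) {y::nat list. length y = d \<and> sum_list y \<le> N}"
      by (auto simp: inj_on_def)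
    show "(\<lambda>y. y @ [N - sum_list y]) ` {y::nat list. length y = d \<and> sum_list y \<le> N} \<subseteq> ?T" by auto
    show "finite ?T" by (rule finite_lists_sum)
  qed
  also have "card ?T = (N + d) choose N" using card_length_sum_list[of "Suc d" N] by simp
  also have "\<dots> = (N + d) choose d" using binomial_symmetric[of N "N + d"] by simp
  finally show ?thesis .
qed

lemma card_Aup:
  assumes d: "d > 0"
  shows "d * card (Aup n d r) \<le> (r + 2 * d - 1) choose d"
proof -
  let ?A = "Aup n d r"
  let ?T = "{y::nat list. length y = d \<and> sum_list y \<le> r + d - 1}"
  have fA: "finite ?A" using finite_V[of n d] unfolding Aup_def by auto
  have fT: "finite ?T"
  proof -
    have "?T \<subseteq> {l. set l \<subseteq> {..r + d - 1} \<and> length l = d}"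
      using member_le_sum_list by fastforce
    moreover have "finite {l::nat list. set l \<subseteq> {..r + d - 1} \<and> length l = d}"
      by (intro finite_lists_length_eq) auto
    ultimately show ?thesis by (rule finite_subset)
  qed
  have sf: "sum_list (x[0 := x ! 0 + j]) = sum_list x + j" if "length x = d" for x :: "nat list" and j
    using sum_list_upd[of 0 x "x ! 0 + j"] that d by simp
  have "card (?A \<times> {..<d}) \<le> card ?T"
  proof (rule card_inj_on_le[OF _ _ fT])
    show "inj_on (\<lambda>(x, j). x[0 := x ! 0 + j]) (?A \<times> {..<d})"
    proof (rule inj_onI)
      fix p p' assume p: "p \<in> ?A \<times> {..<d}" "p' \<in> ?A \<times> {..<d}"
        and eq0: "(\<lambda>(x, j). x[0 := x ! 0 + j]) p = (\<lambda>(x, j). x[0 := x ! 0 + j]) p'"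
      obtain x j x' j' where pp: "p = (x, j)" "p' = (x', j')" by (cases p, cases p')
      have xA: "x \<in> ?A" and j: "j \<in> {..<d}" and x'A: "x' \<in> ?A" and j': "j' \<in> {..<d}"
        using p pp by auto
      have eq: "x[0 := x ! 0 + j] = x'[0 := x' ! 0 + j']" using eq0 pp by simp
      have lx: "length x = d" "length x' = d" using xA x'A unfolding Aup_def Knd_V_def by auto
      have md: "sum_list x mod d = sum_list x' mod d" using xA x'A unfolding Aup_def by auto
      have "sum_list (x[0 := x ! 0 + j]) = sum_list (x'[0 := x' ! 0 + j'])" using eq by simp
      then have se: "sum_list x + j = sum_list x' + j'" using sf[OF lx(1), of j] sf[OF lx(2), of j'] by simp
      have jj: "j = j'"
      proof (rule ccontr)
        assume "j \<noteq> j'"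
        then consider "j < j'" | "j' < j" by linarith
        then show False
        proof cases
          case 1
          then have "sum_list x = sum_list x' + (j' - j)" using se by linarith
          then have "d dvd (j' - j)" using md mod_eq_dvd_iff_nat[of "sum_list x'" "sum_list x" d] by simp
          then show False using 1 j' dvd_imp_le[of d "j' - j"] by auto
        next
          case 2
          then have "sum_list x' = sum_list x + (j - j')" using se by linarith
          then have "d dvd (j - j')" using md mod_eq_dvd_iff_nat[of "sum_list x" "sum_list x'" d] by simp
          then show False using 2 j dvd_imp_le[of d "j - j'"] by auto
        qed
      qed
      have "x = x'"
      proof (rule nth_equalityI)
        show "length x = length x'" using lx by simp
        fix i assume i: "i < length x"
        have "x[0 := x ! 0 + j] ! i = x'[0 := x' ! 0 + j'] ! i" using eq by simp
        then show "x ! i = x' ! i" using i lx jj d by (cases "i = 0") auto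
      qed
      then show "p = p'" using jj pp by simp
    qed
    show "(\<lambda>(x, j). x[0 := x ! 0 + j]) ` (?A \<times> {..<d}) \<subseteq> ?T"
    proof
      fix y assume "y \<in> (\<lambda>(x, j). x[0 := x ! 0 + j]) ` (?A \<times> {..<d})"
      then obtain x j where xA: "x \<in> ?A" and j: "j \<in> {..<d}" and y: "y = x[0 := x ! 0 + j]"
        by auto
      have lx: "length x = d" using xA unfolding Aup_def Knd_V_def by auto
      have "sum_list x \<le> r" using xA unfolding Aup_def by auto
      then show "y \<in> ?T" using sf[OF lx, of j] lx j y by simp
    qed
  qed
  also have "card ?T \<le> (r + d - 1 + d) choose d" by (rule card_lists_le)
  also have "r + d - 1 + d = r + 2 * d - 1" using d by simp
  finally have "card (?A \<times> {..<d}) \<le> (r + 2 * d - 1) choose d" .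
  moreover have "card (?A \<times> {..<d}) = d * card ?A" using card_cartesian_product[of ?A "{..<d}"] by simp
  ultimately show ?thesis by simp
qed

lemma final_ub_ineq:
  fixes r d :: nat
  assumes r: "r > 0" and d: "d \<ge> 2"
  defines "\<delta> \<equiv> (real d - 2) / (real d - 1)"
  shows "real ((r + 2 * d - 1) choose d) / real d
      \<le> ((real r + 2 * real d - 1) ^ d - \<delta>^2 * (real r - 2) ^ d) / (2 * fact d)"
proof -
  define X where "X = real r + 2 * real d - 1"
  define Y where "Y = real r - 2"
  have X0: "X > 0" using r d unfolding X_def by simp
  have cX: "real (r + 2 * d - 1) = X" using d unfolding X_def by (simp add: of_nat_diff)
  have cb: "real ((r + 2 * d - 1) choose d) * fact d \<le> X ^ d"
  proof -
    have "((r + 2 * d - 1) choose d) * fact d \<le> (r + 2 * d - 1) ^ d" by (rule binomial_fact_pow)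
    then have "real (((r + 2 * d - 1) choose d) * fact d) \<le> real ((r + 2 * d - 1) ^ d)"
      by (simp only: of_nat_le_iff)
    then show ?thesis using cX by (simp add: of_nat_mult)
  qed
  have fd: "(fact d :: real) > 0" by simp
  have absY: "\<bar>Y\<bar> \<le> X" using r d unfolding X_def Y_def by auto
  define \<kappa> where "\<kappa> = real d * (real d - 2) / (real d - 1)^2"
  have k0: "0 \<le> \<kappa>" using d unfolding \<kappa>_def by simp
  have k1: "\<kappa> \<le> 1"
  proof -
    have "real d * (real d - 2) \<le> (real d - 1)^2" by (simp add: power2_eq_square algebra_simps)
    moreover have "(real d - 1)^2 > 0" using d by simp
    ultimately show ?thesis unfolding \<kappa>_def by simp
  qed
  have kY: "\<kappa> * Y ^ d \<le> X ^ d"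
  proof (cases "Y ^ d \<le> 0")
    case True
    then have "\<kappa> * Y ^ d \<le> 0" using k0 by (simp add: mult_nonneg_nonpos)
    also have "0 \<le> X ^ d" using X0 by simp
    finally show ?thesis .
  next
    case False
    have "Y ^ d \<le> \<bar>Y\<bar> ^ d" by (metis abs_ge_self power_abs)
    also have "\<dots> \<le> X ^ d" using absY by (intro power_mono) auto
    finally have "Y ^ d \<le> X ^ d" .
    moreover have "\<kappa> * Y ^ d \<le> Y ^ d" using k1 False by (simp add: mult_le_cancel_right1)
    ultimately show ?thesis by linarith
  qed
  have key: "real d * \<delta>^2 * Y ^ d \<le> (real d - 2) * X ^ d"
  proof -
    have "real d * \<delta>^2 = (real d - 2) * \<kappa>"
      unfolding \<delta>_def \<kappa>_def using d by (simp add: power2_eq_square field_simps)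
    then have "real d * \<delta>^2 * Y ^ d = (real d - 2) * (\<kappa> * Y ^ d)" by simp
    also have "\<dots> \<le> (real d - 2) * X ^ d" using kY d by (intro mult_left_mono) auto
    finally show ?thesis .
  qed
  have dpos: "real d > 0" using d by simp
  have "real ((r + 2 * d - 1) choose d) / real d
      = (real ((r + 2 * d - 1) choose d) * fact d) / (real d * fact d)"
    using fd by simp
  also have "\<dots> \<le> X ^ d / (real d * fact d)"
    using cb dpos fd by (intro divide_right_mono) auto
  also have "\<dots> = (2 * X ^ d) / (2 * (real d * fact d))"
    by (rule mult_divide_mult_cancel_left[symmetric]) simp
  also have "\<dots> \<le> (real d * (X ^ d - \<delta>^2 * Y ^ d)) / (2 * (real d * fact d))"
  proof (rule divide_right_mono)
    show "2 * X ^ d \<le> real d * (X ^ d - \<delta>^2 * Y ^ d)" using key by (simp add: algebra_simps)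
    show "0 \<le> 2 * (real d * fact d)" using dpos fd by simp
  qed
  also have "2 * (real d * fact d) = real d * (2 * fact d)" by simp
  also have "(real d * (X ^ d - \<delta>^2 * Y ^ d)) / (real d * (2 * fact d))
      = (X ^ d - \<delta>^2 * Y ^ d) / (2 * fact d)"
    using dpos by (intro mult_divide_mult_cancel_left) simp
  finally show ?thesis by (simp only: X_def Y_def)
qed

definition phi :: "nat \<Rightarrow> nat \<Rightarrow> nat \<Rightarrow> real" where
  "phi n i v = real v + 4 * real n * real i"

definition asg :: "nat \<Rightarrow> nat list \<Rightarrow> nat \<Rightarrow> real" where
  "asg n x = (\<lambda>j. phi n j (x ! j))"

definition tau :: "nat \<Rightarrow> nat \<Rightarrow> nat list \<Rightarrow> nat list \<Rightarrow> real" where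
  "tau n d x y = (\<Sum>i<d. if x ! i \<noteq> y ! i then phi n i (x ! i) + phi n i (y ! i) else 0)"

lemma tau_nb:
  assumes "i < d" "y ! i \<noteq> x ! i" "\<forall>j<d. j \<noteq> i \<longrightarrow> x ! j = y ! j"
  shows "tau n d x y = phi n i (x ! i) + phi n i (y ! i)"
proof -
  have "tau n d x y = (\<Sum>j\<in>{i}. if x ! j \<noteq> y ! j then phi n j (x ! j) + phi n j (y ! j) else 0)"
    unfolding tau_def using assms by (intro sum.mono_neutral_right) auto
  then show ?thesis using assms by simp
qed

lemma compat:
  assumes a: "\<alpha> \<in> Mset d m" and E: "Knd_E d x y"
  shows "mon \<alpha> (asg n x) (tau n d x y) = mon \<alpha> (asg n y) (tau n d x y)"
proof -
  obtain i where i: "i < d" "y ! i \<noteq> x ! i" "\<forall>j<d. j \<noteq> i \<longrightarrow> x ! j = y ! j"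
    using E_upd[OF E] by blast
  have t: "tau n d x y = phi n i (x ! i) + phi n i (y ! i)" using tau_nb[OF i] .
  have l: "length (snd \<alpha>) = d" using a unfolding Mset_def by simp
  show ?thesis unfolding mon_def
  proof (intro arg_cong2[where f = "(*)"] refl prod.cong)
    fix j assume j: "j \<in> {..<length (snd \<alpha>)}"
    show "(asg n x j * (asg n x j - tau n d x y)) ^ (snd \<alpha> ! j)
        = (asg n y j * (asg n y j - tau n d x y)) ^ (snd \<alpha> ! j)"
    proof (cases "j = i")
      case True
      then show ?thesis unfolding t asg_def by (simp add: algebra_simps)
    next
      case False
      then show ?thesis using i(3) j l unfolding asg_def by simp
    qed
  qed
qed

lemma tau_inj:
  assumes n: "n > 0" and x: "x \<in> Knd_V n d"
  shows "inj_on (tau n d x) (nbhd (Knd_V n d) (Knd_E d) x)"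
proof
  fix y y' assume y: "y \<in> nbhd (Knd_V n d) (Knd_E d) x" and y': "y' \<in> nbhd (Knd_V n d) (Knd_E d) x"
    and eq: "tau n d x y = tau n d x y'"
  have yV: "y \<in> Knd_V n d" "Knd_E d x y" using y unfolding nbhd_def by auto
  have yV': "y' \<in> Knd_V n d" "Knd_E d x y'" using y' unfolding nbhd_def by auto
  obtain i where i: "i < d" "y ! i \<noteq> x ! i" "\<forall>j<d. j \<noteq> i \<longrightarrow> x ! j = y ! j"
    using E_upd[OF yV(2)] by blast
  obtain i' where i': "i' < d" "y' ! i' \<noteq> x ! i'" "\<forall>j<d. j \<noteq> i' \<longrightarrow> x ! j = y' ! j"
    using E_upd[OF yV'(2)] by blast
  have bx: "x ! k < n" "y ! k < n" "y' ! k < n" if "k < d" for k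
    using x yV(1) yV'(1) that unfolding Knd_V_def by auto
  have t: "tau n d x y = real (x ! i) + real (y ! i) + 8 * real n * real i"
    using tau_nb[OF i, of n] unfolding phi_def by simp
  have t': "tau n d x y' = real (x ! i') + real (y' ! i') + 8 * real n * real i'"
    using tau_nb[OF i', of n] unfolding phi_def by simp
  have ii: "i = i'"
  proof (rule ccontr)
    assume "i \<noteq> i'"
    then consider "i < i'" | "i' < i" by linarith
    then show False
    proof cases
      case 1
      then have "real i + 1 \<le> real i'" by simp
      then have "8 * real n * (real i + 1) \<le> 8 * real n * real i'" using n by simp
      moreover have "real (x ! i) + real (y ! i) < 8 * real n" using bx[OF i(1)] by simp
      ultimately show False using eq t t' by (simp add: algebra_simps)
    next
      case 2
      then have "real i' + 1 \<le> real i" by simp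
      then have "8 * real n * (real i' + 1) \<le> 8 * real n * real i" using n by simp
      moreover have "real (x ! i') + real (y' ! i') < 8 * real n" using bx[OF i'(1)] by simp
      ultimately show False using eq t t' by (simp add: algebra_simps)
    qed
  qed
  have "y ! i = y' ! i" using eq t t' ii by simp
  have ly: "length x = d" "length y = d" "length y' = d" using x yV(1) yV'(1) unfolding Knd_V_def by auto
  have "y = x[i := y ! i]" using upd_eq_of[OF ly(1,2) i(1) i(3)] .
  moreover have "y' = x[i := y' ! i]" using upd_eq_of[OF ly(1,3) i'(1) i'(3)] ii by simp
  ultimately show "y = y'" using \<open>y ! i = y' ! i\<close> by metis
qed

definition gfun :: "nat \<Rightarrow> nat \<Rightarrow> nat \<Rightarrow> (nat \<times> nat list \<Rightarrow> real) \<Rightarrow> nat list \<Rightarrow> real \<Rightarrow> real" where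
  "gfun n d m c x t = (\<Sum>\<alpha>\<in>Mset d m. c \<alpha> * mon \<alpha> (asg n x) t)"

lemma g_zero_of_roots:
  assumes "finite R" "m < card R" "\<forall>t\<in>R. gfun n d m c x t = 0"
  shows "gfun n d m c x t = 0"
proof -
  let ?P = "\<Sum>\<alpha>\<in>Mset d m. smult (c \<alpha>) (monp \<alpha> (asg n x))"
  have e: "gfun n d m c x s = poly ?P s" for s unfolding gfun_def by (rule Gpoly)
  have "?P = 0" using poly_zero_many_roots[OF Gdeg assms(1,2)] assms(3) e by simp
  then show ?thesis using e by simp
qed

lemma propagate:
  assumes n: "n > 0" and r: "r > 0" and perc: "percolating (Knd_V n d) (Knd_E d) r A0"
    and hz: "\<forall>a\<in>A0. \<forall>j<r. gfun n d (r - 1) c a (real j) = 0"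
  shows "\<forall>x\<in>Knd_V n d. \<forall>t. gfun n d (r - 1) c x t = 0"
proof -
  let ?V = "Knd_V n d" and ?E = "Knd_E d"
  define Z where "Z = {x \<in> ?V. \<forall>t. gfun n d (r - 1) c x t = 0}"
  have AV: "A0 \<subseteq> ?V" and cov: "(\<Union>i. (bp_step ?V ?E r ^^ i) A0) = ?V"
    using perc unfolding percolating_def by auto
  have A0Z: "A0 \<subseteq> Z"
  proof
    fix a assume a: "a \<in> A0"
    have "gfun n d (r - 1) c a t = 0" for t
    proof (rule g_zero_of_roots[of "real ` {..<r}"])
      show "finite (real ` {..<r})" by simp
      show "r - 1 < card (real ` {..<r})" using r by (simp add: card_image)
      show "\<forall>t\<in>real ` {..<r}. gfun n d (r - 1) c a t = 0" using hz a by auto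
    qed
    then show "a \<in> Z" using a AV unfolding Z_def by auto
  qed
  have "(bp_step ?V ?E r ^^ i) A0 \<subseteq> Z" for i
  proof (induction i)
    case 0 then show ?case using A0Z by simp
  next
    case (Suc i)
    let ?S = "(bp_step ?V ?E r ^^ i) A0"
    show ?case
    proof
      fix v assume "v \<in> (bp_step ?V ?E r ^^ Suc i) A0"
      then have "v \<in> ?S \<or> (v \<in> ?V \<and> r \<le> card (nbhd ?V ?E v \<inter> ?S))"
        unfolding bp_step_def by simp
      then show "v \<in> Z"
      proof
        assume "v \<in> ?S" then show ?thesis using Suc.IH by blast
      next
        assume v: "v \<in> ?V \<and> r \<le> card (nbhd ?V ?E v \<inter> ?S)"
        let ?R = "tau n d v ` (nbhd ?V ?E v \<inter> ?S)"
        have fin: "finite (nbhd ?V ?E v \<inter> ?S)"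
          using finite_V[of n d] unfolding nbhd_def by (rule finite_subset[rotated]) auto
        have "inj_on (tau n d v) (nbhd ?V ?E v)" using tau_inj[OF n] v by blast
        then have inj: "inj_on (tau n d v) (nbhd ?V ?E v \<inter> ?S)" by (rule inj_on_subset) auto
        have "gfun n d (r - 1) c v t = 0" for t
        proof (rule g_zero_of_roots[of ?R])
          show "finite ?R" using fin by simp
          have "card ?R = card (nbhd ?V ?E v \<inter> ?S)" by (rule card_image[OF inj])
          then show "r - 1 < card ?R" using conjunct2[OF v] r by linarith
          show "\<forall>t\<in>?R. gfun n d (r - 1) c v t = 0"
          proof
            fix t assume "t \<in> ?R"
            then obtain u where u: "u \<in> nbhd ?V ?E v" "u \<in> ?S" "t = tau n d v u" by auto
            have E: "?E v u" using u(1) unfolding nbhd_def by simp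
            have uZ: "u \<in> Z" using u(2) Suc.IH by blast
            have "gfun n d (r - 1) c v t = gfun n d (r - 1) c u t"
              unfolding gfun_def u(3) using compat[OF _ E] by (intro sum.cong refl) simp
            also have "\<dots> = 0" using uZ unfolding Z_def by simp
            finally show "gfun n d (r - 1) c v t = 0" .
          qed
        qed
        then show ?thesis using v unfolding Z_def by auto
      qed
    qed
  qed
  then have "?V \<subseteq> Z" using cov by blast
  then show ?thesis unfolding Z_def by auto
qed

lemma lower_count:
  assumes n: "n \<ge> r + 1" and r: "r > 0" and perc: "percolating (Knd_V n d) (Knd_E d) r A0"
  shows "card (Mset d (r - 1)) \<le> card A0 * r"
proof -
  let ?V = "Knd_V n d"
  have AV: "A0 \<subseteq> ?V" using perc unfolding percolating_def by auto
  have fA: "finite A0" using finite_V[of n d] AV by (rule finite_subset[rotated])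
  have n0: "n > 0" using n by simp
  define S where "S j = phi n j ` {..<n}" for j
  have injphi: "inj_on (phi n j) {..<n}" for j by (auto simp: inj_on_def phi_def)
  have "card (Mset d (r - 1)) \<le> card (A0 \<times> {..<r})"
  proof (rule lin_count[OF finite_Mset, of _ "\<lambda>\<alpha> q. mon \<alpha> (asg n (fst q)) (real (snd q))"])
    show "finite (A0 \<times> {..<r})" using fA by simp
    fix c assume hc: "\<forall>q\<in>A0 \<times> {..<r}. (\<Sum>\<alpha>\<in>Mset d (r - 1). c \<alpha> * mon \<alpha> (asg n (fst q)) (real (snd q))) = 0"
    have hz: "\<forall>a\<in>A0. \<forall>j<r. gfun n d (r - 1) c a (real j) = 0"
      using hc unfolding gfun_def by auto
    have allz: "\<forall>x\<in>?V. \<forall>t. gfun n d (r - 1) c x t = 0" by (rule propagate[OF n0 r perc hz])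
    show "\<forall>\<alpha>\<in>Mset d (r - 1). c \<alpha> = 0"
    proof (rule indep_mon[of d S])
      show "\<forall>j<d. finite (S j) \<and> r - 1 < card (S j)"
        using n by (auto simp: S_def card_image[OF injphi])
      show "\<forall>a. (\<forall>j<d. a j \<in> S j) \<longrightarrow> (\<forall>t. (\<Sum>\<alpha>\<in>Mset d (r - 1). c \<alpha> * mon \<alpha> a t) = 0)"
      proof (intro allI impI)
        fix a t assume a: "\<forall>j<d. a j \<in> S j"
        define x where "x = map (\<lambda>j. inv_into {..<n} (phi n j) (a j)) [0..<d]"
        have xj: "x ! j \<in> {..<n} \<and> phi n j (x ! j) = a j" if "j < d" for j
        proof -
          have aj: "a j \<in> phi n j ` {..<n}" using a that unfolding S_def by simp
          have "x ! j = inv_into {..<n} (phi n j) (a j)" using that unfolding x_def by simp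
          then show ?thesis using inv_into_into[OF aj] f_inv_into_f[OF aj] by simp
        qed
        have xV: "x \<in> ?V" using xj unfolding Knd_V_def x_def by auto
        have "(\<Sum>\<alpha>\<in>Mset d (r - 1). c \<alpha> * mon \<alpha> a t) = gfun n d (r - 1) c x t"
          unfolding gfun_def
        proof (intro sum.cong refl arg_cong2[where f = "(*)"] mon_cong)
          fix \<alpha> j assume "\<alpha> \<in> Mset d (r - 1)" "j < length (snd \<alpha>)"
          then have "j < d" unfolding Mset_def by simp
          then show "a j = asg n x j" using xj unfolding asg_def by simp
        qed
        also have "\<dots> = 0" using allz xV by blast
        finally show "(\<Sum>\<alpha>\<in>Mset d (r - 1). c \<alpha> * mon \<alpha> a t) = 0" .
      qed
    qed
  qed
  then show ?thesis by (simp add: card_cartesian_product)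
qed

lemma card_Mset_ge:
  assumes r: "r > 0"
  shows "(d + r) choose (d + 1) \<le> card (Mset d (r - 1))"
proof -
  let ?T = "{l::nat list. length l = Suc (Suc d) \<and> sum_list l = r - 1}"
  have dec: "l = hd l # take d (tl l) @ [l ! Suc d]" "sum_list l = hd l + sum_list (take d (tl l)) + l ! Suc d"
    if len: "length l = Suc (Suc d)" for l :: "nat list"
  proof -
    obtain a ys where l: "l = a # ys" and ys: "length ys = Suc d" using len by (cases l) auto
    have "ys = take d ys @ [ys ! d]" using take_Suc_conv_app_nth[of d ys] ys by simp
    then show "l = hd l # take d (tl l) @ [l ! Suc d]" using l by simp
    then show "sum_list l = hd l + sum_list (take d (tl l)) + l ! Suc d"
      by (metis add.assoc sum_list.Cons sum_list_append sum_list.Nil add_0_right)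
  qed
  have "card ?T \<le> card (Mset d (r - 1))"
  proof (rule card_inj_on_le[OF _ _ finite_Mset])
    show "inj_on (\<lambda>l. (hd l, take d (tl l))) ?T"
    proof
      fix l l' assume l: "l \<in> ?T" and l': "l' \<in> ?T" and e: "(hd l, take d (tl l)) = (hd l', take d (tl l'))"
      have ll: "length l = Suc (Suc d)" "length l' = Suc (Suc d)" using l l' by simp_all
      have e1: "hd l = hd l'" and e2: "take d (tl l) = take d (tl l')" using e by simp_all
      have e3: "l ! Suc d = l' ! Suc d" using dec(2)[OF ll(1)] dec(2)[OF ll(2)] l l' e1 e2 by simp
      have "l = hd l # take d (tl l) @ [l ! Suc d]" by (rule dec(1)[OF ll(1)])
      also have "\<dots> = hd l' # take d (tl l') @ [l' ! Suc d]" by (simp only: e1 e2 e3)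
      also have "\<dots> = l'" by (rule dec(1)[OF ll(2), symmetric])
      finally show "l = l'" .
    qed
    show "(\<lambda>l. (hd l, take d (tl l))) ` ?T \<subseteq> Mset d (r - 1)"
    proof
      fix p assume "p \<in> (\<lambda>l. (hd l, take d (tl l))) ` ?T"
      then obtain l where l: "l \<in> ?T" "p = (hd l, take d (tl l))" by auto
      then show "p \<in> Mset d (r - 1)" using dec(2)[of l] unfolding Mset_def by auto
    qed
  qed
  moreover have "card ?T = (r - 1 + Suc (Suc d) - 1) choose (r - 1)" by (rule card_length_sum_list)
  moreover have "(r - 1 + Suc (Suc d) - 1) choose (r - 1) = (d + r) choose (d + 1)"
  proof -
    have "r - 1 + Suc (Suc d) - 1 = d + r" using r by simp
    moreover have "(d + r) choose (r - 1) = (d + r) choose (d + 1)"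
      using binomial_symmetric[of "r - 1" "d + r"] r by simp
    ultimately show ?thesis by (simp add: add.commute)
  qed
  ultimately show ?thesis by simp
qed


theorem theorem4p4:
  fixes n r d :: nat
  assumes "n > 0" "r > 0" "d \<ge> 2" "n \<ge> r + 1"
  defines "\<delta> \<equiv> (real d - 2) / (real d - 1)"
  shows "(1 / real r) * real ((d + r) choose (d + 1)) \<le> real (m_perc (Knd_V n d) (Knd_E d) r)
       \<and> real (m_perc (Knd_V n d) (Knd_E d) r)
           \<le> ((real r + 2 * real d - 1) ^ d - \<delta>^2 * (real r - 2) ^ d) / (2 * fact d)"
proof -
  let ?V = "Knd_V n d" and ?E = "Knd_E d"
  have d0: "d > 0" using assms(3) by simp
  have pA: "percolating ?V ?E r (Aup n d r)" by (rule Aup_perc[OF d0 assms(4)])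
  define P where "P k = (\<exists>A. percolating ?V ?E r A \<and> card A = k)" for k
  have ex: "P (card (Aup n d r))" using pA unfolding P_def by auto
  have mdef: "m_perc ?V ?E r = (LEAST k. P k)" unfolding m_perc_def P_def ..
  have "P (LEAST k. P k)" using ex by (rule LeastI)
  then obtain A0 where A0: "percolating ?V ?E r A0" "card A0 = m_perc ?V ?E r"
    using mdef unfolding P_def by auto
  have le: "m_perc ?V ?E r \<le> card (Aup n d r)" unfolding mdef using ex by (rule Least_le)
  have low: "(d + r) choose (d + 1) \<le> card A0 * r"
    using card_Mset_ge[OF assms(2), of d] lower_count[OF assms(4) assms(2) A0(1)] by linarith
  have rpos: "real r > 0" using assms(2) by simp
  have "real ((d + r) choose (d + 1)) \<le> real (card A0) * real r"
    using low by (metis of_nat_le_iff of_nat_mult)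
  then have L: "(1 / real r) * real ((d + r) choose (d + 1)) \<le> real (m_perc ?V ?E r)"
    using rpos A0(2) by (simp add: field_simps)
  have cA: "real d * real (card (Aup n d r)) \<le> real ((r + 2 * d - 1) choose d)"
    using card_Aup[OF d0, of n r] by (metis of_nat_le_iff of_nat_mult)
  have dpos: "real d > 0" using d0 by simp
  have "real (card (Aup n d r)) \<le> real ((r + 2 * d - 1) choose d) / real d"
    using cA dpos by (simp add: field_simps)
  also have "\<dots> \<le> ((real r + 2 * real d - 1) ^ d - \<delta>^2 * (real r - 2) ^ d) / (2 * fact d)"
    using final_ub_ineq[OF assms(2) assms(3)] unfolding \<delta>_def .
  finally have U: "real (m_perc ?V ?E r) \<le> ((real r + 2 * real d - 1) ^ d - \<delta>^2 * (real r - 2) ^ d) / (2 * fact d)"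
    using le by (meson of_nat_le_iff order_trans)
  show ?thesis using L U by blast
qed

end
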